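(* Fix $n\geq 2$, $k\geq 1$, and let $K=J(2k+1,2m)$ with $|m|\geq 2$. Let $\phi_K(x,y)$ be the Riley polynomial of $K$ with respect to the presentation $\pi_1(S^3\setminus K)=\langle a,b\mid w^ma=bw^m\rangle$, $w=(ba^{-1})^kba(b^{-1}a)^k$. Then $\phi_K(2\cos(\pi/n),y)$ has a real root $y_n>2$ in the following cases: (1) $n\geq 3$ when $m\leq -3$; (2) $n\geq 4$ when $m=-2$; (3) $n\geq 5$ when $m=2$; (4) $n\geq 4$ when $m=3$; (5) $n\geq 3$ when $m\geq 4$.
   Context: $J(2k+1,2m)$ is the double twist knot (two-bridge knot with twist regions of $2k+1$ and $2m$ signed half-twists), whose group has the stated presentation with $a,b$ meridians. Riley polynomial: with $A=\begin{bmatrix}s&1\\0&s^{-1}\end{bmatrix}$, $B=\begin{bmatrix}s&0\\2-y&s^{-1}\end{bmatrix}$ and $V$ the word $w^m$ evaluated at $A,B$, the $(1,2)$-entry of $VA-BV$ equals $f(s+s^{-1},y)$ for some $f\in\mathbb{Z}[x,y]$, and $\phi_K:=f$. Explicitly, with Chebyshev polynomials $S_{-1}=0$, $S_0=1$, $S_1=z$, $S_{n+1}=zS_n-S_{n-1}$, $\lambda=x^2-y-(y-2)(y+2-x^2)S_k(y)S_{k-1}(y)$, $\alpha=1+(y+2-x^2)S_{k-1}(y)(S_k(y)-S_{k-1}(y))$: $\phi_K=S_{m-1}(\lambda)\alpha-S_{m-2}(\lambda)$ for $m\geq 1$ and $\phi_K=S_{|m|}(\lambda)-S_{|m|-1}(\lambda)\alpha$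 for $m\leq-1$. *)

theory Defs
  imports Complex_Main
begin

fun cheb_nat :: "nat \<Rightarrow> real \<Rightarrow> real" where
  "cheb_nat 0 z = 1"
| "cheb_nat (Suc 0) z = z"
| "cheb_nat (Suc (Suc n)) z = z * cheb_nat (Suc n) z - cheb_nat n z"

text \<open>Integer-indexed version with the convention S_(-1) = 0 (only index -1 among negatives
  can occur in the formulas below).\<close>
definition cheb :: "int \<Rightarrow> real \<Rightarrow> real" where
  "cheb i z = (if i < 0 then 0 else cheb_nat (nat i) z)"

definition riley_lambda :: "int \<Rightarrow> real \<Rightarrow> real \<Rightarrow> real" where
  "riley_lambda k x y = x^2 - y - (y - 2) * (y + 2 - x^2) * cheb k y * cheb (k - 1) y"

definition riley_alpha :: "int \<Rightarrow> real \<Rightarrow> real \<Rightarrow> real" where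
  "riley_alpha k x y = 1 + (y + 2 - x^2) * cheb (k - 1) y * (cheb k y - cheb (k - 1) y)"

text \<open>Riley polynomial phi_K(x,y) of the double twist knot J(2k+1, 2m), viewed as a
  real function of (x,y).\<close>
definition riley_poly :: "int \<Rightarrow> int \<Rightarrow> real \<Rightarrow> real \<Rightarrow> real" where
  "riley_poly k m x y =
    (let l = riley_lambda k x y; a = riley_alpha k x y in
     if m \<ge> 1 then cheb (m - 1) l * a - cheb (m - 2) l
     else cheb \<bar>m\<bar> l - cheb (\<bar>m\<bar> - 1) l * a)"

end

theory Submission
  imports Defs
begin


lemma cheb_nat_sin0: "z = 2 * cos th \<Longrightarrow> cheb_nat i z * sin th = sin (real (Suc i) * th)"
proof (induction i z rule: cheb_nat.induct)
  case (1 z) then show ?case by simp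
next
  case (2 z) then show ?case by (simp add: sin_double)
next
  case (3 n z)
  have e1: "sin (real (Suc (Suc (Suc n))) * th) = sin (real (Suc (Suc n)) * th + th)" by (simp add: algebra_simps)
  have e2: "sin (real (Suc n) * th) = sin (real (Suc (Suc n)) * th - th)" by (simp add: algebra_simps)
  define u where "u = real (Suc (Suc n)) * th"
  have h1: "cheb_nat (Suc n) z * sin th = sin u" using 3 unfolding u_def by simp
  have h2: "cheb_nat n z * sin th = sin (u - th)" using 3 e2 unfolding u_def by simp
  have "cheb_nat (Suc (Suc n)) z * sin th = z * (cheb_nat (Suc n) z * sin th) - cheb_nat n z * sin th"
    by (simp add: algebra_simps)
  also have "\<dots> = 2*cos th * sin u - sin (u - th)" using h1 h2 3(3) by simp
  also have "\<dots> = sin (u + th)" by (simp add: sin_add sin_diff)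
  finally show ?case using e1 unfolding u_def by simp
qed

lemma cheb_nat_sin: "cheb_nat i (2 * cos th) * sin th = sin (real (Suc i) * th)"
  by (rule cheb_nat_sin0) simp

lemma cheb_nat_cont[continuous_intros]: "continuous_on s f \<Longrightarrow> continuous_on s (\<lambda>x. cheb_nat i (f x))"
proof (induction i rule: less_induct)
  case (less i)
  show ?case
  proof (cases i)
    case 0 then show ?thesis by (auto intro!: continuous_intros)
  next
    case (Suc j) then show ?thesis using less less.prems
      by (cases j) (auto intro!: continuous_intros)
  qed
qed

lemma cheb_cont[continuous_intros]: "continuous_on s f \<Longrightarrow> continuous_on s (\<lambda>x. cheb i (f x))"
  by (cases "i < 0") (auto simp: cheb_def intro!: continuous_intros)

lemma riley_cont: "continuous_on s (\<lambda>y. riley_poly k m x y)"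
  unfolding riley_poly_def Let_def riley_lambda_def riley_alpha_def
  by (cases "m \<ge> 1") (auto intro!: continuous_intros)

lemma lambda_cont: "continuous_on s (\<lambda>y. riley_lambda k x y)"
  unfolding riley_lambda_def by (auto intro!: continuous_intros)

lemma cheb_ge: "z \<ge> 2 \<Longrightarrow> cheb_nat i z \<ge> 1 \<and> cheb_nat (Suc i) z - cheb_nat i z \<ge> 1"
proof (induction i)
  case 0 then show ?case by simp
next
  case (Suc i)
  then have a: "cheb_nat i z \<ge> 1" "cheb_nat (Suc i) z - cheb_nat i z \<ge> 1" by auto
  have "(z - 1) * cheb_nat (Suc i) z \<ge> cheb_nat (Suc i) z"
    using a Suc.prems mult_right_mono[of 1 "z-1" "cheb_nat (Suc i) z"] by simp
  moreover have "(z - 1) * cheb_nat (Suc i) z = z * cheb_nat (Suc i) z - cheb_nat (Suc i) z"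
    by (simp add: algebra_simps)
  ultimately show ?case using a by (simp only: cheb_nat.simps) linarith
qed

lemma cheb_roots:
  assumes "0 < j" "j < N"
  shows "cheb_nat (N - 1) (2 * cos (real j * pi / real N)) = 0"
    "cheb_nat (N - 2) (2 * cos (real j * pi / real N)) = - ((-1) ^ j)"
proof -
  let ?th = "real j * pi / real N"
  have s: "sin ?th > 0" using assms by (intro sin_gt_zero) (auto simp: field_simps)
  have "cheb_nat (N - 1) (2 * cos ?th) * sin ?th = sin (real N * ?th)"
    using cheb_nat_sin[of "N - 1" ?th] assms by (simp add: Suc_diff_1 del: of_nat_Suc)
  also have "real N * ?th = real j * pi" using assms by simp
  also have "sin (real j * pi) = 0" by (simp add: sin_zero_iff_int2)
  finally show "cheb_nat (N - 1) (2 * cos ?th) = 0" using s by simp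
  have "cheb_nat (N - 2) (2 * cos ?th) * sin ?th = sin (real (Suc (N - 2)) * ?th)"
    by (rule cheb_nat_sin)
  also have "real (Suc (N - 2)) * ?th = real j * pi - ?th" using assms
    by (simp add: of_nat_diff field_simps)
  also have "sin (real j * pi - ?th) = - ((-1)^j) * sin ?th"
    by (simp add: sin_diff sin_zero_iff_int2 cos_int_times_real[where m="int j", simplified] )
  finally show "cheb_nat (N - 2) (2 * cos ?th) = - ((-1) ^ j)" using s
    by (metis (no_types, lifting) mult_cancel_right mult_minus_left order_less_irrefl)
qed

lemma cheb_k: "k \<ge> 1 \<Longrightarrow> cheb k y = cheb_nat (Suc (nat (k-1))) y \<and> cheb (k-1) y = cheb_nat (nat (k-1)) y"
  by (simp add: cheb_def Suc_nat_eq_nat_zadd1)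

lemma lam_alpha_bounds:
  assumes k: "k \<ge> 1" and x: "x^2 \<le> 4" and y: "y \<ge> 2"
  shows "riley_lambda k x y \<le> x^2 - y" "riley_alpha k x y \<ge> 1"
    "riley_alpha k x y \<ge> 1 + (y + 2 - x^2)"
proof -
  obtain a b where ab: "cheb k y = b" "cheb (k-1) y = a" by blast
  have "a \<ge> 1 \<and> b - a \<ge> 1" using cheb_ge[OF y, of "nat (k-1)"] cheb_k[OF k, of y] ab by simp
  then have a: "a \<ge> 1" "b - a \<ge> 1" "b \<ge> 1" by auto
  have p: "y + 2 - x^2 \<ge> 0" "y - 2 \<ge> 0" using x y by auto
  have "(y - 2) * (y + 2 - x^2) * b * a \<ge> 0" using a p by simp
  then show "riley_lambda k x y \<le> x^2 - y" unfolding riley_lambda_def ab by simp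
  have "a * (b - a) \<ge> 1" using a mult_mono[of 1 a 1 "b-a"] by simp
  then have "(y + 2 - x^2) * a * (b - a) \<ge> (y + 2 - x^2)"
    using p mult_left_mono[of 1 "a * (b-a)" "y + 2 - x^2"] by (simp add: mult.assoc)
  then show "riley_alpha k x y \<ge> 1 + (y + 2 - x^2)" unfolding riley_alpha_def ab by simp
  then show "riley_alpha k x y \<ge> 1" using p by simp
qed

lemma hit:
  assumes k: "k \<ge> 1" and x: "x^2 \<le> 4" and v: "-2 \<le> v" "v \<le> x^2 - 2"
  shows "\<exists>y\<ge>2. riley_lambda k x y = v \<and> riley_alpha k x y \<ge> 1"
proof -
  have "riley_lambda k x 6 \<le> -2" using lam_alpha_bounds(1)[OF k x, of 6] x by simp
  moreover have "riley_lambda k x 2 = x^2 - 2" by (simp add: riley_lambda_def)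
  ultimately obtain y where "2 \<le> y" "y \<le> 6" "riley_lambda k x y = v"
    using IVT2'[of "riley_lambda k x" 6 v 2] v lambda_cont by auto
  then show ?thesis using lam_alpha_bounds(2)[OF k x] by auto
qed

lemma sign_change:
  assumes "2 \<le> y1" "2 \<le> y2" "s * f y1 > 0" "s * f y2 < 0" "continuous_on UNIV (f :: real \<Rightarrow> real)"
  shows "\<exists>y>2. f y = 0"
proof -
  have c: "\<And>a b. continuous_on {a..b} f" using assms(5) continuous_on_subset by blast
  have "s \<noteq> 0" using assms by auto
  have "(s * f y1) * (s * f y2) < 0" using assms(3,4) mult_pos_neg by blast
  also have "(s * f y1) * (s * f y2) = (s*s) * (f y1 * f y2)" by (simp add: algebra_simps)
  finally have prod: "f y1 * f y2 < 0" using \<open>s \<noteq> 0\<close>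
    by (simp add: mult_less_0_iff)
  have "\<exists>y. min y1 y2 \<le> y \<and> y \<le> max y1 y2 \<and> f y = 0"
  proof (cases "f (min y1 y2) \<le> 0")
    case True
    then have "f (max y1 y2) \<ge> 0" using prod by (cases "y1 \<le> y2") (auto simp: min_def max_def mult_less_0_iff)
    then show ?thesis using IVT'[of f "min y1 y2" 0 "max y1 y2"] True c by auto
  next
    case False
    then have "f (max y1 y2) \<le> 0" using prod by (cases "y1 \<le> y2") (auto simp: min_def max_def mult_less_0_iff)
    then show ?thesis using IVT2'[of f "max y1 y2" 0 "min y1 y2"] False c by auto
  qed
  then obtain y where y: "min y1 y2 \<le> y" "f y = 0" by auto
  have "f y1 \<noteq> 0" "f y2 \<noteq> 0" using prod by auto
  then have "y \<noteq> 2" using y assms(1,2) by (auto simp: min_def split: if_splits)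
  then have "y > 2" using y(1) assms(1,2) by (simp add: min_def split: if_splits)
  then show ?thesis using y(2) by blast
qed

lemma poly_pos:
  assumes "m \<ge> 2"
  shows "riley_poly k m x y = cheb_nat (nat m - 1) (riley_lambda k x y) * riley_alpha k x y
           - cheb_nat (nat m - 2) (riley_lambda k x y)"
  using assms unfolding riley_poly_def Let_def cheb_def
  by (simp add: nat_diff_distrib)

lemma poly_neg:
  assumes "m \<le> -2"
  shows "riley_poly k m x y = cheb_nat (nat (-m) + 1 - 1) (riley_lambda k x y)
           - cheb_nat (nat (-m) + 1 - 2) (riley_lambda k x y) * riley_alpha k x y"
  using assms unfolding riley_poly_def Let_def cheb_def
  by (simp add: nat_diff_distrib)

lemma root_pos:
  assumes k: "k \<ge> 1" and x: "x^2 \<le> 4" and m: "m \<ge> 2" and j: "0 < j" "j < nat m"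
    and v: "2 * cos (real j * pi / real (nat m)) \<le> x^2 - 2"
  shows "\<exists>y\<ge>2. riley_poly k m x y = (-1)^j"
proof -
  obtain y where y: "y \<ge> 2" "riley_lambda k x y = 2 * cos (real j * pi / real (nat m))"
    using hit[OF k x _ v] by auto
  show ?thesis using y cheb_roots[OF j] poly_pos[OF m] by (intro exI[of _ y]) simp
qed

lemma root_neg:
  assumes k: "k \<ge> 1" and x: "x^2 \<le> 4" and m: "m \<le> -2" and j: "0 < j" "j < nat (-m) + 1"
    and v: "2 * cos (real j * pi / real (nat (-m) + 1)) \<le> x^2 - 2"
  shows "\<exists>y\<ge>2. (-1)^j * riley_poly k m x y > 0"
proof -
  obtain y where y: "y \<ge> 2" "riley_lambda k x y = 2 * cos (real j * pi / real (nat (-m) + 1))"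
    "riley_alpha k x y \<ge> 1"
    using hit[OF k x _ v] by auto
  have "riley_poly k m x y = (-1)^j * riley_alpha k x y"
    using y cheb_roots[OF j] poly_neg[OF m] by simp
  then have "(-1)^j * riley_poly k m x y = riley_alpha k x y" by (simp flip: mult.assoc power_mult_distrib)
  then show ?thesis using y by (intro exI[of _ y]) simp
qed



lemma cos_2pi3: "cos (2*pi/3) = -1/2"
proof -
  have "2*pi/3 = pi - pi/3" by simp
  then have "cos (2*pi/3) = cos (pi - pi/3)" by (rule arg_cong)
  also have "\<dots> = -1/2" by (simp only: cos_pi_minus cos_60)
  finally show ?thesis .
qed

lemma cos_le_half: "2/3 \<le> r \<Longrightarrow> r \<le> 1 \<Longrightarrow> cos (r * pi) \<le> -1/2"
proof -
  assume r: "2/3 \<le> r" "r \<le> 1"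
  have "cos (r*pi) \<le> cos (2*pi/3)" using r by (intro cos_monotone_0_pi_le) auto
  also have "cos (2*pi/3) = -1/2" by (rule cos_2pi3)
  finally show ?thesis .
qed

lemma cos_le_0: "1/2 \<le> r \<Longrightarrow> r \<le> 1 \<Longrightarrow> cos (r * pi) \<le> 0"
proof -
  assume r: "1/2 \<le> r" "r \<le> 1"
  have "cos (r*pi) \<le> cos (pi/2)" using r by (intro cos_monotone_0_pi_le) auto
  then show ?thesis by simp
qed

lemma cos_2pi5: "cos (2*pi/5) > 3/10"
proof -
  define th where "th = pi/5"
  define c where "c = cos th"
  have th: "0 < th" "th < pi/2" unfolding th_def by auto
  have c0: "c > 0" unfolding c_def using th by (intro cos_gt_zero) auto
  have "cos (3*th) = cos (pi - 2*th)" unfolding th_def by simp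
  then have e: "cos (3*th) = - cos (2*th)" by simp
  have "3*th = 2*th + th" by simp
  then have "cos (3*th) = cos (2*th + th)" by (rule arg_cong)
  also have "\<dots> = cos (2*th) * c - sin (2*th) * sin th" unfolding c_def by (rule cos_add)
  also have "\<dots> = (2*c^2 - 1) * c - 2 * (sin th)^2 * c" by (simp add: cos_double_cos sin_double c_def power2_eq_square)
  also have "(sin th)^2 = 1 - c^2" by (simp add: c_def sin_squared_eq)
  finally have "(2*c^2 - 1) * c - 2 * (1 - c^2) * c = - (2*c^2 - 1)" using e by (simp add: cos_double_cos c_def)
  then have "(c + 1) * (4*c^2 - 2*c - 1) = 0" by (simp add: algebra_simps power2_eq_square power3_eq_cube)
  then have q: "4*c^2 - 2*c - 1 = 0" using c0 by simp
  have "c > 4/5"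
  proof (rule ccontr)
    assume "\<not> c > 4/5"
    then have "c \<le> 4/5" by simp
    then have "4*c^2 \<le> 4 * (4/5)*c" using c0 by (simp add: power2_eq_square)
    then show False using q c0 \<open>c \<le> 4/5\<close> by linarith
  qed
  moreover have "cos (2*pi/5) = 2*c^2 - 1" unfolding c_def th_def by (simp add: cos_double_cos[symmetric])
  ultimately show ?thesis using q by linarith
qed

lemma t_facts:
  fixes n :: nat assumes "n \<ge> 3"
  shows "cos (2*pi/n) \<ge> -1/2" "n \<ge> 4 \<Longrightarrow> cos (2*pi/n) \<ge> 0"
    "n \<ge> 5 \<Longrightarrow> cos (2*pi/n) > 3/10" "n = 3 \<Longrightarrow> cos (2*pi/n) = -1/2"
proof -
  have np: "real n \<ge> 3" using assms by simp
  have "cos (2*pi/3) \<le> cos (2*pi/n)" using np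
    by (intro cos_monotone_0_pi_le) (auto simp: field_simps)
  then show "cos (2*pi/n) \<ge> -1/2" using cos_2pi3 by simp
  show "n \<ge> 4 \<Longrightarrow> cos (2*pi/n) \<ge> 0"
  proof -
    assume "n \<ge> 4" then have "real n \<ge> 4" by simp
    then have "2*pi/n \<le> pi/2" by (simp add: field_simps)
    moreover have "0 \<le> 2*pi/n" by simp
    moreover have "0 \<le> pi/2" by simp
    ultimately show ?thesis by (intro cos_ge_zero) linarith+
  qed
  show "n \<ge> 5 \<Longrightarrow> cos (2*pi/n) > 3/10"
  proof -
    assume "n \<ge> 5" then have "real n \<ge> 5" by simp
    then have "cos (2*pi/5) \<le> cos (2*pi/n)"
      by (intro cos_monotone_0_pi_le) (auto simp: field_simps)
    then show ?thesis using cos_2pi5 by simp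
  qed
  show "n = 3 \<Longrightarrow> cos (2*pi/n) = -1/2" using cos_2pi3 by simp
qed

lemma x_facts:
  fixes n :: nat
  shows "(2 * cos (pi / real n))^2 - 2 = 2 * cos (2*pi/n)" "(2 * cos (pi / real n))^2 \<le> 4"
proof -
  have "cos (2 * (pi/n)) = 2 * cos (pi/n)^2 - 1" by (rule cos_double_cos)
  then show "(2 * cos (pi / real n))^2 - 2 = 2 * cos (2*pi/n)" by (simp add: power_mult_distrib)
  have "cos (pi/n)^2 \<le> 1" by (simp add: cos_squared_eq)
  then show "(2 * cos (pi / real n))^2 \<le> 4" by (simp add: power_mult_distrib)
qed



lemma cheb_small: "cheb_nat 0 z = 1" "cheb_nat 1 z = z" "cheb_nat 2 z = z*z-1"
  "cheb_nat 3 z = z*z*z - 2*z" "cheb_nat 4 z = z*z*z*z - 3*z*z + 1"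
  by (simp_all add: eval_nat_numeral algebra_simps)

lemma angle_m1: "0 < N \<Longrightarrow> 3*j \<ge> 2*N \<Longrightarrow> j \<le> N \<Longrightarrow> 2 * cos (real j * pi / real N) \<le> -1"
proof -
  assume a: "0 < N" "3*j \<ge> 2*N" "j \<le> N"
  have "real j * pi / real N = (real j / real N) * pi" by simp
  moreover have "2/3 \<le> real j / real N" "real j / real N \<le> 1" using a by (simp_all add: field_simps)
  ultimately show ?thesis using cos_le_half by fastforce
qed

lemma angle_0: "0 < N \<Longrightarrow> 2*j \<ge> N \<Longrightarrow> j \<le> N \<Longrightarrow> 2 * cos (real j * pi / real N) \<le> 0"
proof -
  assume a: "0 < N" "2*j \<ge> N" "j \<le> N"
  have "real j * pi / real N = (real j / real N) * pi" by simp
  moreover have "1/2 \<le> real j / real N" "real j / real N \<le> 1" using a by (simp_all add: field_simps)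
  ultimately show ?thesis using cos_le_0 by fastforce
qed

lemma pos_b:
  assumes k: "k \<ge> 1" and x: "x^2 \<le> 4" and m: "m \<ge> 2"
    and v: "2 * cos (real (nat m - 1) * pi / real (nat m)) \<le> x^2 - 2"
  shows "\<exists>y\<ge>2. (-1)^(nat m) * riley_poly k m x y < 0"
proof -
  define q where "q = nat m - 1"
  have q: "nat m = Suc q" using m unfolding q_def by simp
  have "q > 0" using q m by simp
  obtain y where "y \<ge> 2" "riley_poly k m x y = (-1)^q"
    using root_pos[OF k x m, of q] q v \<open>q > 0\<close> by auto
  then show ?thesis using q by (intro exI[of _ y]) simp
qed

lemma pos_a:
  assumes k: "k \<ge> 1" and x: "x^2 \<le> 4" and m: "m \<ge> 3"
    and v: "2 * cos (real (nat m - 2) * pi / real (nat m)) \<le> x^2 - 2"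
  shows "\<exists>y\<ge>2. (-1)^(nat m) * riley_poly k m x y > 0"
proof -
  define q where "q = nat m - 2"
  have q: "nat m = Suc (Suc q)" using m unfolding q_def by simp
  have "q > 0" using q m by simp
  have m2: "m \<ge> 2" using m by simp
  obtain y where "y \<ge> 2" "riley_poly k m x y = (-1)^q"
    using root_pos[OF k x m2, of q] q v \<open>q > 0\<close> by auto
  then show ?thesis using q by (intro exI[of _ y]) simp
qed

lemma neg_b:
  assumes k: "k \<ge> 1" and x: "x^2 \<le> 4" and m: "m \<le> -2"
    and v: "2 * cos (real (nat (-m)) * pi / real (nat (-m) + 1)) \<le> x^2 - 2"
  shows "\<exists>y\<ge>2. (-1)^(nat (-m)) * riley_poly k m x y > 0"
  using root_neg[OF k x m, of "nat (-m)"] v m by simp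

lemma neg_a:
  assumes k: "k \<ge> 1" and x: "x^2 \<le> 4" and m: "m \<le> -2"
    and v: "2 * cos (real (nat (-m) - 1) * pi / real (nat (-m) + 1)) \<le> x^2 - 2"
  shows "\<exists>y\<ge>2. (-1)^(nat (-m)) * riley_poly k m x y < 0"
proof -
  define q where "q = nat (-m) - 1"
  have q: "nat (-m) = Suc q" using m unfolding q_def by simp
  have "q > 0" using q m by simp
  obtain y where "y \<ge> 2" "(-1)^q * riley_poly k m x y > 0"
    using root_neg[OF k x m, of q] q v \<open>q > 0\<close> by auto
  then show ?thesis using q by (intro exI[of _ y]) simp
qed



theorem theorem5p5:
  fixes n :: nat and k m :: int
  assumes "n \<ge> 2" and "k \<ge> 1" and "\<bar>m\<bar> \<ge> 2"
    and "(m \<le> -3 \<and> n \<ge> 3) \<or> (m = -2 \<and> n \<ge> 4) \<or> (m = 2 \<and> n \<ge> 5)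
         \<or> (m = 3 \<and> n \<ge> 4) \<or> (m \<ge> 4 \<and> n \<ge> 3)"
  shows "\<exists>y::real. y > 2 \<and> riley_poly k m (2 * cos (pi / real n)) y = 0"
proof -
  define x where "x = 2 * cos (pi / real n)"
  define t where "t = 2 * cos (2*pi/n)"
  have k: "k \<ge> 1" by fact
  have x4: "x^2 \<le> 4" and xt: "x^2 - 2 = t" using x_facts[of n] unfolding x_def t_def by auto
  have n3: "n \<ge> 3" using assms(4) by auto
  have t1: "t \<ge> -1" using t_facts(1)[OF n3] unfolding t_def by simp
  have t4: "n \<ge> 4 \<Longrightarrow> t \<ge> 0" using t_facts(2)[OF n3] unfolding t_def by simp
  have t5: "n \<ge> 5 \<Longrightarrow> t > 3/5" using t_facts(3)[OF n3] unfolding t_def by simp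
  have t3: "n = 3 \<Longrightarrow> t = -1" using t_facts(4)[OF n3] unfolding t_def by simp
  have t2: "t \<le> 2" using x4 xt by simp
  have L2: "riley_lambda k x 2 = t" using xt by (simp add: riley_lambda_def)
  have A2: "riley_alpha k x 2 \<ge> 3 - t" "riley_alpha k x 2 \<ge> 1"
    using lam_alpha_bounds(2,3)[OF k x4, of 2] xt by auto
  define f where "f = riley_poly k m x"
  have cont: "continuous_on UNIV f" unfolding f_def by (rule riley_cont)
  have cos13: "2 * cos (real (1::nat) * pi / real (3::nat)) = 1" by (simp add: cos_60)
  have key: "\<exists>y1\<ge>2. \<exists>y2\<ge>2. \<exists>s. s * f y1 > 0 \<and> s * f y2 < 0"
  proof (cases "m \<ge> 2")
    case True
    define M where "M = nat m"
    have mM: "m = int M" using True unfolding M_def by simp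
    have bc: "2 * cos (real (nat m - 1) * pi / real (nat m)) \<le> x^2 - 2"
    proof (cases "M = 2")
      case True
      then have "n \<ge> 5" using assms(4) mM by auto
      then show ?thesis using True t5 xt unfolding M_def by simp
    next
      case False
      then have "M \<ge> 3" using \<open>m \<ge> 2\<close> mM by simp
      then have "2 * cos (real (M - 1) * pi / real M) \<le> -1" by (intro angle_m1) auto
      then show ?thesis using t1 xt unfolding M_def by simp
    qed
    obtain y2 where y2: "y2 \<ge> 2" "(-1)^M * f y2 < 0" using pos_b[OF k x4 True bc]
      unfolding f_def M_def by auto
    have "\<exists>y1\<ge>2. (-1)^M * f y1 > 0"
    proof -
      have pa: "?thesis" if "2 * cos (real (M - 2) * pi / real M) \<le> t" "M \<ge> 3"
        using pos_a[OF k x4, of m] that xt mM unfolding f_def M_def by simp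
      consider "M = 2" | "M = 3" | "M = 4 \<or> M = 5" | "M \<ge> 6" using \<open>m \<ge> 2\<close> mM by linarith
      then show ?thesis
      proof cases
        case 1
        have "n \<ge> 5" using assms(4) mM 1 by auto
        then have tt: "t > 3/5" using t5 by simp
        have a: "t * riley_alpha k x 2 \<ge> t * (3 - t)" using A2 tt by (intro mult_left_mono) auto
        have b: "(t - 3/5) * (2 - t) \<ge> 0" using tt t2 by simp
        have c: "(t-3/5)*(2-t) = 13/5*t - t*t - 6/5" by (simp add: field_simps)
        have d: "t * (3 - t) = 3*t - t*t" by (simp add: algebra_simps)
        have "t * riley_alpha k x 2 \<ge> 3*t - t*t" using a d by simp
        moreover have "0 \<le> 13/5*t - t*t - 6/5" using b c by simp
        ultimately have "t * riley_alpha k x 2 \<ge> 3*t - t*t" "0 \<le> 13/5*t - t*t - 6/5" by auto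
        then have "t * riley_alpha k x 2 - 1 > 0" using tt by linarith
        then have "f 2 > 0" using poly_pos[of m k x 2] 1 mM L2 unfolding f_def
          by (simp add: cheb_small)
        then show ?thesis using 1 by (intro exI[of _ 2]) simp
      next
        case 2
        have "n \<ge> 4" using assms(4) mM 2 by auto
        show ?thesis
        proof (cases "t \<ge> 1")
          case True
          then show ?thesis using pa 2 cos13 by simp
        next
          case False
          have "t \<ge> 0" using t4 \<open>n \<ge> 4\<close> by simp
          have "t*t \<le> t*1" using False \<open>t \<ge> 0\<close> by (intro mult_left_mono) auto
          then have "t*t < 1" using False by simp
          have "(t*t - 1) * riley_alpha k x 2 < 0" using A2 \<open>t*t < 1\<close>
            by (intro mult_neg_pos) auto
          then have "f 2 < 0" using poly_pos[of m k x 2] 2 mM L2 False \<open>t \<ge> 0\<close> unfolding f_def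
            by (simp add: cheb_small)
          then show ?thesis using 2 by (intro exI[of _ 2]) simp
        qed
      next
        case 3
        show ?thesis
        proof (cases "n \<ge> 4")
          case True
          have "2 * cos (real (M - 2) * pi / real M) \<le> 0" using 3 by (intro angle_0) auto
          then show ?thesis using pa t4 True 3 by auto
        next
          case False
          then have "t = -1" using t3 n3 by simp
          from 3 show ?thesis
          proof
            assume "M = 4"
            then have "f 2 > 0" using poly_pos[of m k x 2] mM L2 \<open>t = -1\<close> A2 unfolding f_def
              by (simp add: cheb_small)
            then show ?thesis using \<open>M = 4\<close> by (intro exI[of _ 2]) simp
          next
            assume "M = 5"
            then have "f 2 < 0" using poly_pos[of m k x 2] mM L2 \<open>t = -1\<close> A2 unfolding f_def
              by (simp add: cheb_small)
            then show ?thesis using \<open>M = 5\<close> by (intro exI[of _ 2]) simp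
          qed
        qed
      next
        case 4
        have "2 * cos (real (M - 2) * pi / real M) \<le> -1" using 4 by (intro angle_m1) auto
        then show ?thesis using pa t1 4 by auto
      qed
    qed
    then show ?thesis using y2 by blast
  next
    case False
    then have m2: "m \<le> -2" using assms(3) by simp
    define p where "p = nat (-m)"
    have mp: "m = - int p" using m2 unfolding p_def by simp
    have p2: "p \<ge> 2" using m2 unfolding p_def by simp
    have bc: "2 * cos (real (nat (-m)) * pi / real (nat (-m) + 1)) \<le> x^2 - 2"
    proof -
      have "2 * cos (real p * pi / real (p + 1)) \<le> -1" using p2 by (intro angle_m1) auto
      then show ?thesis using t1 xt unfolding p_def by simp
    qed
    obtain y1 where y1: "y1 \<ge> 2" "(-1)^p * f y1 > 0" using neg_b[OF k x4 m2 bc]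
      unfolding f_def p_def by auto
    have "\<exists>y2\<ge>2. (-1)^p * f y2 < 0"
    proof -
      have na: "?thesis" if "2 * cos (real (p - 1) * pi / real (p + 1)) \<le> t"
        using neg_a[OF k x4 m2] that xt unfolding f_def p_def by simp
      have pn: "f y = cheb_nat p (riley_lambda k x y) - cheb_nat (p - 1) (riley_lambda k x y) * riley_alpha k x y" for y
        using poly_neg[OF m2, of k x y] unfolding f_def p_def by simp
      consider "p = 2" | "p = 3 \<or> p = 4" | "p \<ge> 5" using p2 by linarith
      then show ?thesis
      proof cases
        case 1
        have "n \<ge> 4" using assms(4) mp 1 by auto
        show ?thesis
        proof (cases "t \<ge> 1")
          case True
          then show ?thesis using na 1 cos13 by simp
        next
          case False
          have "t \<ge> 0" using t4 \<open>n \<ge> 4\<close> by simp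
          have "t * riley_alpha k x 2 \<ge> 0" using A2 \<open>t \<ge> 0\<close> by simp
          have "t*t \<le> t*1" using False \<open>t \<ge> 0\<close> by (intro mult_left_mono) auto
          then have "t*t < 1" using False by simp
          then have "f 2 < 0" using pn[of 2] 1 L2 \<open>t * riley_alpha k x 2 \<ge> 0\<close>
            by (simp add: cheb_small)
          then show ?thesis using 1 by (intro exI[of _ 2]) simp
        qed
      next
        case 2
        show ?thesis
        proof (cases "n \<ge> 4")
          case True
          have "2 * cos (real (p - 1) * pi / real (p + 1)) \<le> 0" using 2 by (intro angle_0) auto
          then show ?thesis using na t4 True by auto
        next
          case False
          then have "t = -1" using t3 n3 by simp
          from 2 show ?thesis
          proof
            assume "p = 3"
            then have "f 2 > 0" using pn[of 2] L2 \<open>t = -1\<close> by (simp add: cheb_small)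
            then show ?thesis using \<open>p = 3\<close> by (intro exI[of _ 2]) simp
          next
            assume "p = 4"
            then have "f 2 < 0" using pn[of 2] L2 \<open>t = -1\<close> A2 by (simp add: cheb_small)
            then show ?thesis using \<open>p = 4\<close> by (intro exI[of _ 2]) simp
          qed
        qed
      next
        case 3
        have "2 * cos (real (p - 1) * pi / real (p + 1)) \<le> -1" using 3 by (intro angle_m1) auto
        then show ?thesis using na t1 by auto
      qed
    qed
    then show ?thesis using y1 by blast
  qed
  then obtain y1 y2 s where "y1 \<ge> 2" "y2 \<ge> 2" "s * f y1 > 0" "s * f y2 < 0" by blast
  then obtain y where "y > 2" "f y = 0" using sign_change cont by blast
  then show ?thesis unfolding f_def x_def by blast
qed

end
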